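(* Let $\Theta\subset[0,1]$ be compact, $A=[0,1]$, and let $u:A\times\Theta\to\mathbb R$ be continuous, differentiable in $a$, with $u_a=\partial u/\partial a$ continuous on $A\times\Theta$. The following are equivalent: (1) For every $a\in A$ and every $\mu\in\Delta(\Theta)$, $\int u(a,\theta)\,d\mu=0$ implies $\int u_a(a,\theta)\,d\mu<0$. (2) For all $\theta,\theta'\in\Theta$ and $a\in A$: $u(a,\theta)=0\Rightarrow u_a(a,\theta)<0$; and $u(a,\theta)<0<u(a,\theta')\Rightarrow u(a,\theta')u_a(a,\theta)-u(a,\theta)u_a(a,\theta')<0$. (3) There exists a differentiable function $g:A\to(0,\infty)$ such that $\tilde u(a,\theta)=u(a,\theta)/g(a)$ satisfies $\tilde u_a(a,\theta)<0$ for all $(a,\theta)\in A\times\Theta$.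
   Context: $\Delta(\Theta)$ denotes the set of Borel probability measures on $\Theta$. *)

theory Defs
  imports "HOL-Probability.Probability"
begin

definition prob_measures_on :: "real set \<Rightarrow> real measure set" where
  "prob_measures_on \<Theta> = {M. prob_space M \<and> sets M = sets (restrict_space borel \<Theta>)}"

end

theory Submission
  imports Defs
begin


lemma meas_basic:
  fixes \<Theta> :: "real set" and f :: "real \<Rightarrow> real"
  assumes "compact \<Theta>" "continuous_on \<Theta> f" "M \<in> prob_measures_on \<Theta>"
  shows "space M = \<Theta>" "f \<in> borel_measurable M" "integrable M f"
proof -
  have P: "prob_space M" and S: "sets M = sets (restrict_space borel \<Theta>)"
    using assms(3) by (auto simp: prob_measures_on_def)
  interpret prob_space M by (rule P)
  show sp: "space M = \<Theta>" using sets_eq_imp_space_eq[OF S] by (simp add: space_restrict_space)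
  show m: "f \<in> borel_measurable M"
    unfolding measurable_cong_sets[OF S refl] by (rule borel_measurable_continuous_on_restrict[OF assms(2)])
  have "compact (f ` \<Theta>)" using compact_continuous_image assms by blast
  then obtain B where B: "\<forall>x\<in>f ` \<Theta>. norm x \<le> B" using compact_imp_bounded bounded_iff by metis
  show "integrable M f"
    by (rule integrable_const_bound[where B=B]) (use B sp m in auto)
qed

lemma meas_21:
  fixes \<Theta> :: "real set" and f h :: "real \<Rightarrow> real"
  assumes cpt: "compact \<Theta>" and cf: "continuous_on \<Theta> f" and ch: "continuous_on \<Theta> h"
    and MM: "M \<in> prob_measures_on \<Theta>"
    and Z: "\<forall>\<theta>\<in>\<Theta>. f \<theta> = 0 \<longrightarrow> h \<theta> < 0"
    and PN: "\<forall>\<theta>\<in>\<Theta>. \<forall>\<theta>'\<in>\<Theta>. f \<theta> < 0 \<and> 0 < f \<theta>' \<longrightarrow> f \<theta>' * h \<theta> - f \<theta> * h \<theta>' < 0"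
    and I0: "integral\<^sup>L M f = 0"
  shows "integral\<^sup>L M h < 0"
proof -
  interpret prob_space M using MM by (auto simp: prob_measures_on_def)
  note bf = meas_basic[OF cpt cf MM] and bh = meas_basic[OF cpt ch MM]
  have sp: "space M = \<Theta>" using bf by simp
  have fm[measurable]: "f \<in> borel_measurable M" and fi: "integrable M f" using bf by auto
  have hm[measurable]: "h \<in> borel_measurable M" and hi: "integrable M h" using bh by auto
  show ?thesis
  proof (cases "(AE x in M. f x \<le> 0) \<or> (AE x in M. 0 \<le> f x)")
    case True
    have "AE x in M. f x = 0"
    proof (cases "AE x in M. 0 \<le> f x")
      case True then show ?thesis using integral_nonneg_eq_0_iff_AE[OF fi True] I0 by simp
    next
      case False
      then have a: "AE x in M. 0 \<le> - f x" using \<open>(AE x in M. f x \<le> 0) \<or> (AE x in M. 0 \<le> f x)\<close> by auto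
      have "integral\<^sup>L M (\<lambda>x. - f x) = 0" using I0 by simp
      then have "AE x in M. - f x = 0" using integral_nonneg_eq_0_iff_AE[OF integrable_minus[OF fi] a] by simp
      then show ?thesis by auto
    qed
    then have "AE x in M. h x < 0" using AE_space by eventually_elim (use Z sp in auto)
    then have "integral\<^sup>L M h < integral\<^sup>L M (\<lambda>x. 0)"
      by (intro integral_less_AE_space) (auto simp: hi emeasure_space_1)
    then show ?thesis by simp
  next
    case False
    define P where "P = {x\<in>space M. 0 < f x}"
    define N where "N = {x\<in>space M. f x < 0}"
    define Zs where "Zs = {x\<in>space M. f x = 0}"
    have Pm: "P \<in> sets M" unfolding P_def by measurable
    have Nm: "N \<in> sets M" unfolding N_def by measurable
    have Zm: "Zs \<in> sets M" unfolding Zs_def by measurable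
    have P0: "emeasure M P \<noteq> 0"
      using False AE_iff_measurable[OF Pm, of "\<lambda>x. f x \<le> 0"] by (auto simp: P_def not_le)
    have N0: "emeasure M N \<noteq> 0"
      using False AE_iff_measurable[OF Nm, of "\<lambda>x. 0 \<le> f x"] by (auto simp: N_def not_le)
    have ii: "\<And>(k::real\<Rightarrow>real) A. integrable M k \<Longrightarrow> A \<in> sets M \<Longrightarrow> integrable M (\<lambda>x. k x * indicator A x)"
      by (rule integrable_real_mult_indicator) auto
    have dec: "integral\<^sup>L M k = integral\<^sup>L M (\<lambda>x. k x * indicator P x) + integral\<^sup>L M (\<lambda>x. k x * indicator N x)
        + integral\<^sup>L M (\<lambda>x. k x * indicator Zs x)" if ki: "integrable M k" for k :: "real \<Rightarrow> real"
    proof -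
      have "integral\<^sup>L M k = integral\<^sup>L M (\<lambda>x. k x * indicator P x + k x * indicator N x + k x * indicator Zs x)"
        by (rule Bochner_Integration.integral_cong) (auto simp: P_def N_def Zs_def indicator_def)
      also have "\<dots> = integral\<^sup>L M (\<lambda>x. k x * indicator P x) + integral\<^sup>L M (\<lambda>x. k x * indicator N x)
        + integral\<^sup>L M (\<lambda>x. k x * indicator Zs x)"
        using ii[OF ki Pm] ii[OF ki Nm] ii[OF ki Zm] by simp
      finally show ?thesis .
    qed
    define c where "c = integral\<^sup>L M (\<lambda>x. f x * indicator P x)"
    define HP where "HP = integral\<^sup>L M (\<lambda>x. h x * indicator P x)"
    define HN where "HN = integral\<^sup>L M (\<lambda>x. h x * indicator N x)"
    define HZ where "HZ = integral\<^sup>L M (\<lambda>x. h x * indicator Zs x)"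
    have fZ: "integral\<^sup>L M (\<lambda>x. f x * indicator Zs x) = 0"
    proof -
      have "integral\<^sup>L M (\<lambda>x. f x * indicator Zs x) = integral\<^sup>L M (\<lambda>x. 0)"
        by (rule Bochner_Integration.integral_cong) (auto simp: Zs_def indicator_def)
      then show ?thesis by simp
    qed
    have fN: "integral\<^sup>L M (\<lambda>x. f x * indicator N x) = - c"
      using dec[OF fi] fZ I0 by (simp add: c_def)
    have "integral\<^sup>L M (\<lambda>x. 0) < integral\<^sup>L M (\<lambda>x. f x * indicator P x)"
      by (rule integral_less_AE[OF _ ii[OF fi Pm] P0 Pm]) (auto simp: P_def indicator_def)
    then have c0: "0 < c" by (simp add: c_def)
    have step1: "h t * c - f t * HP < 0" if t: "t \<in> N" for t
    proof -
      have i1: "integrable M (\<lambda>x. (f x * h t - f t * h x) * indicator P x)"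
        by (intro ii Pm) (auto intro!: integrable_diff integrable_mult_left fi hi)
      have "integral\<^sup>L M (\<lambda>x. (f x * h t - f t * h x) * indicator P x) < integral\<^sup>L M (\<lambda>x. 0)"
      proof (rule integral_less_AE[OF i1 _ P0 Pm])
        show "AE x in M. x \<in> P \<longrightarrow> (f x * h t - f t * h x) * indicator P x \<noteq> 0"
          using PN t by (intro AE_I2) (fastforce simp: P_def N_def sp)
        show "AE x in M. (f x * h t - f t * h x) * indicator P x \<le> 0"
        proof (intro AE_I2)
          fix x assume "x \<in> space M"
          show "(f x * h t - f t * h x) * indicator P x \<le> 0"
          proof (cases "x \<in> P")
            case True
            then have "f x * h t - f t * h x < 0" using PN t by (auto simp: P_def N_def sp)
            then show ?thesis using True by simp
          qed simp
        qed
      qed simp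
      moreover have "integral\<^sup>L M (\<lambda>x. (f x * h t - f t * h x) * indicator P x)
          = integral\<^sup>L M (\<lambda>x. h t * (f x * indicator P x) - f t * (h x * indicator P x))"
        by (rule Bochner_Integration.integral_cong) (auto simp: algebra_simps)
      moreover have "\<dots> = h t * c - f t * HP"
        using ii[OF fi Pm] ii[OF hi Pm] by (simp add: c_def HP_def)
      ultimately show ?thesis by simp
    qed
    have "c * (HN + HP) < 0"
    proof -
      have i1: "integrable M (\<lambda>x. (h x * c - f x * HP) * indicator N x)"
        by (intro ii Nm) (auto intro!: integrable_diff integrable_mult_left fi hi)
      have "integral\<^sup>L M (\<lambda>x. (h x * c - f x * HP) * indicator N x) < integral\<^sup>L M (\<lambda>x. 0)"
      proof (rule integral_less_AE[OF i1 _ N0 Nm])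
        show "AE x in M. x \<in> N \<longrightarrow> (h x * c - f x * HP) * indicator N x \<noteq> 0"
          using step1 by (intro AE_I2) fastforce
        show "AE x in M. (h x * c - f x * HP) * indicator N x \<le> 0"
        proof (intro AE_I2)
          fix x assume "x \<in> space M"
          show "(h x * c - f x * HP) * indicator N x \<le> 0"
          proof (cases "x \<in> N")
            case True
            then show ?thesis using step1[OF True] by simp
          qed simp
        qed
      qed simp
      moreover have "integral\<^sup>L M (\<lambda>x. (h x * c - f x * HP) * indicator N x)
          = integral\<^sup>L M (\<lambda>x. c * (h x * indicator N x) - HP * (f x * indicator N x))"
        by (rule Bochner_Integration.integral_cong) (auto simp: algebra_simps)
      moreover have "\<dots> = c * HN - HP * (- c)"
        using ii[OF fi Nm] ii[OF hi Nm] fN by (simp add: HN_def)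
      ultimately show ?thesis by (simp add: algebra_simps)
    qed
    then have s: "HN + HP < 0" using c0 by (simp add: mult_less_0_iff)
    have "HZ \<le> integral\<^sup>L M (\<lambda>x. 0)" unfolding HZ_def
      by (rule Bochner_Integration.integral_mono[OF ii[OF hi Zm]])
         (use Z in \<open>auto simp: Zs_def sp indicator_def intro: less_imp_le\<close>)
    then have "HZ \<le> 0" by simp
    then show ?thesis using dec[OF hi] s by (simp add: HP_def HN_def HZ_def)
  qed
qed

lemma mix_meas:
  fixes \<Theta> :: "real set"
  assumes t: "t \<in> \<Theta>" "t' \<in> \<Theta>" and p: "0 \<le> p" "p \<le> 1"
  shows "distr (measure_pmf (bernoulli_pmf p)) (restrict_space borel \<Theta>) (\<lambda>b. if b then t else t') \<in> prob_measures_on \<Theta>"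
    and "continuous_on \<Theta> F \<Longrightarrow> integral\<^sup>L (distr (measure_pmf (bernoulli_pmf p)) (restrict_space borel \<Theta>) (\<lambda>b. if b then t else t')) F
          = p * F t + (1 - p) * (F t' :: real)"
proof -
  have m: "(\<lambda>b. if b then t else t') \<in> measurable (measure_pmf (bernoulli_pmf p)) (restrict_space borel \<Theta>)"
    using t by (auto simp: space_restrict_space)
  show "distr (measure_pmf (bernoulli_pmf p)) (restrict_space borel \<Theta>) (\<lambda>b. if b then t else t') \<in> prob_measures_on \<Theta>"
    unfolding prob_measures_on_def
    using prob_space.prob_space_distr[OF prob_space_measure_pmf m] by simp
  assume "continuous_on \<Theta> F"
  then have "F \<in> borel_measurable (restrict_space borel \<Theta>)" by (rule borel_measurable_continuous_on_restrict)
  then show "integral\<^sup>L (distr (measure_pmf (bernoulli_pmf p)) (restrict_space borel \<Theta>) (\<lambda>b. if b then t else t')) F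
          = p * F t + (1 - p) * F t'"
    using p by (simp add: integral_distr[OF m] mult.commute)
qed



lemma compact_sub:
  fixes f :: "'a::t2_space \<Rightarrow> real"
  assumes "compact S" "continuous_on S f" "closed T"
  shows "compact {x\<in>S. f x \<in> T}"
proof -
  have "closed (S \<inter> f -` T)"
    using continuous_closed_preimage assms compact_imp_closed by blast
  then have "compact (S \<inter> (S \<inter> f -` T))" using assms(1) by blast
  moreover have "{x\<in>S. f x \<in> T} = S \<inter> (S \<inter> f -` T)" by auto
  ultimately show ?thesis by simp
qed

lemma ratio_lemma:
  fixes a b x y :: real
  assumes "0 < a" "b < 0" "a * y - b * x < 0"
  shows "x / a < y / b"
proof -
  have "x / a - y / b = (x * b - y * a) / (a * b)" using assms by (simp add: field_simps)
  moreover have "x * b - y * a > 0" using assms(3) by (simp add: algebra_simps)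
  moreover have "a * b < 0" using assms by (simp add: mult_pos_neg)
  ultimately have "x / a - y / b < 0" by (simp add: divide_pos_neg)
  then show ?thesis by simp
qed

lemma point_k:
  fixes \<Theta> :: "real set" and f h :: "real \<Rightarrow> real"
  assumes cpt: "compact \<Theta>" and cf: "continuous_on \<Theta> f" and ch: "continuous_on \<Theta> h"
    and Z: "\<forall>\<theta>\<in>\<Theta>. f \<theta> = 0 \<longrightarrow> h \<theta> < 0"
    and PN: "\<forall>\<theta>\<in>\<Theta>. \<forall>\<theta>'\<in>\<Theta>. f \<theta> < 0 \<and> 0 < f \<theta>' \<longrightarrow> f \<theta>' * h \<theta> - f \<theta> * h \<theta>' < 0"
  shows "\<exists>k. \<forall>\<theta>\<in>\<Theta>. h \<theta> < f \<theta> * k"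
proof -
  obtain \<delta> where d0: "\<delta> > 0" and dZ: "\<forall>\<theta>\<in>\<Theta>. f \<theta> = 0 \<longrightarrow> h \<theta> \<le> -2*\<delta>"
  proof (cases "{\<theta>\<in>\<Theta>. f \<theta> \<in> {0}} = {}")
    case True then show ?thesis using that[of 1] by auto
  next
    case False
    have "compact {\<theta>\<in>\<Theta>. f \<theta> \<in> {0}}" by (rule compact_sub[OF cpt cf]) auto
    moreover have "continuous_on {\<theta>\<in>\<Theta>. f \<theta> \<in> {0}} h" using ch by (rule continuous_on_subset) auto
    ultimately obtain x where x: "x \<in> {\<theta>\<in>\<Theta>. f \<theta> \<in> {0}}" and xm: "\<forall>y\<in>{\<theta>\<in>\<Theta>. f \<theta> \<in> {0}}. h y \<le> h x"
      using continuous_attains_sup[OF _ False] by blast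
    have "h x < 0" using x Z by auto
    then show ?thesis using that[of "- h x / 2"] xm by auto
  qed
  obtain \<epsilon> where e0: "\<epsilon> > 0" and eZ: "\<forall>\<theta>\<in>\<Theta>. \<bar>f \<theta>\<bar> \<le> \<epsilon> \<longrightarrow> h \<theta> \<le> -\<delta>"
  proof (cases "{\<theta>\<in>\<Theta>. h \<theta> \<in> {-\<delta>..}} = {}")
    case True then show ?thesis using that[of 1] by force
  next
    case False
    let ?W = "{\<theta>\<in>\<Theta>. h \<theta> \<in> {-\<delta>..}}"
    have "compact ?W" by (rule compact_sub[OF cpt ch]) auto
    moreover have "continuous_on ?W (\<lambda>\<theta>. \<bar>f \<theta>\<bar>)"
      using cf by (intro continuous_on_rabs) (rule continuous_on_subset, auto)
    ultimately obtain x where x: "x \<in> ?W" and xm: "\<forall>y\<in>?W. \<bar>f x\<bar> \<le> \<bar>f y\<bar>"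
      using continuous_attains_inf[OF _ False] by blast
    have "f x \<noteq> 0" using x dZ d0 by force
    then have p: "\<bar>f x\<bar> > 0" by simp
    show ?thesis
    proof (rule that[of "\<bar>f x\<bar> / 2"])
      show "\<forall>\<theta>\<in>\<Theta>. \<bar>f \<theta>\<bar> \<le> \<bar>f x\<bar> / 2 \<longrightarrow> h \<theta> \<le> - \<delta>"
      proof (intro ballI impI)
        fix \<theta> assume t: "\<theta> \<in> \<Theta>" "\<bar>f \<theta>\<bar> \<le> \<bar>f x\<bar> / 2"
        show "h \<theta> \<le> - \<delta>"
        proof (rule ccontr)
          assume "\<not> h \<theta> \<le> - \<delta>"
          then have "\<theta> \<in> ?W" using t by auto
          then show False using xm t p by force
        qed
      qed
    qed (use p in auto)
  qed
  have "compact (h ` \<Theta>)" using compact_continuous_image[OF ch cpt] .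
  then obtain B0 where B0: "\<forall>x\<in>h ` \<Theta>. norm x \<le> B0" using compact_imp_bounded bounded_iff by metis
  define B where "B = max B0 0"
  have B: "\<forall>\<theta>\<in>\<Theta>. \<bar>h \<theta>\<bar> \<le> B" "B \<ge> 0" using B0 by (auto simp: B_def)
  define \<eta> where "\<eta> = min \<epsilon> (\<delta> * \<epsilon> / (B + 1))"
  have eta0: "\<eta> > 0" using e0 d0 B by (auto simp: \<eta>_def)
  have eta_e: "\<eta> \<le> \<epsilon>" by (simp add: \<eta>_def)
  define K where "K = \<delta> / \<eta>"
  have K0: "K > 0" using d0 eta0 by (simp add: K_def)
  have Ke: "K * \<epsilon> > B"
  proof -
    have "\<eta> \<le> \<delta> * \<epsilon> / (B + 1)" by (simp add: \<eta>_def)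
    then have "\<eta> * (B + 1) \<le> \<delta> * \<epsilon>" using B by (simp add: field_simps)
    then have "\<eta> * B < \<delta> * \<epsilon>" using eta0 by (simp add: algebra_simps)
    then have "B < \<delta> * \<epsilon> / \<eta>" using eta0 by (simp add: field_simps)
    then show ?thesis by (simp add: K_def)
  qed
  have Keta: "K * \<eta> = \<delta>" using eta0 by (simp add: K_def)
  have rP: "h \<theta> < K * f \<theta>" if "\<theta> \<in> \<Theta>" "f \<theta> \<ge> \<eta>" for \<theta>
  proof (cases "f \<theta> \<ge> \<epsilon>")
    case True
    have "h \<theta> \<le> B" using B that by force
    also have "B < K * \<epsilon>" by (rule Ke)
    also have "K * \<epsilon> \<le> K * f \<theta>" using True K0 by simp
    finally show ?thesis .
  next
    case False
    then have "h \<theta> \<le> -\<delta>" using eZ that eta0 by auto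
    moreover have "K * f \<theta> > 0" using K0 that eta0 by simp
    ultimately show ?thesis using d0 by linarith
  qed
  have rN: "h \<theta> < - K * f \<theta>" if "\<theta> \<in> \<Theta>" "f \<theta> \<le> -\<eta>" for \<theta>
  proof (cases "f \<theta> \<le> -\<epsilon>")
    case True
    have "h \<theta> \<le> B" using B that by force
    also have "B < K * \<epsilon>" by (rule Ke)
    also have "K * \<epsilon> \<le> - K * f \<theta>" using mult_left_mono[of \<epsilon> "- f \<theta>" K] True K0 by simp
    finally show ?thesis .
  next
    case False
    then have "h \<theta> \<le> -\<delta>" using eZ that eta0 by auto
    moreover have "- K * f \<theta> > 0" using K0 that eta0 by (simp add: mult_pos_neg)
    ultimately show ?thesis using d0 by linarith
  qed
  define Pe where "Pe = {\<theta>\<in>\<Theta>. f \<theta> \<in> {\<eta>..}}"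
  define Ne where "Ne = {\<theta>\<in>\<Theta>. f \<theta> \<in> {..-\<eta>}}"
  have cPe: "compact Pe" unfolding Pe_def by (rule compact_sub[OF cpt cf]) auto
  have cNe: "compact Ne" unfolding Ne_def by (rule compact_sub[OF cpt cf]) auto
  have crP: "continuous_on Pe (\<lambda>\<theta>. h \<theta> / f \<theta>)"
    by (intro continuous_on_divide continuous_on_subset[OF cf] continuous_on_subset[OF ch])
       (use eta0 in \<open>auto simp: Pe_def\<close>)
  have crN: "continuous_on Ne (\<lambda>\<theta>. h \<theta> / f \<theta>)"
    by (intro continuous_on_divide continuous_on_subset[OF cf] continuous_on_subset[OF ch])
       (use eta0 in \<open>auto simp: Ne_def\<close>)
  obtain lo where lo: "-K \<le> lo" "lo < K" "\<forall>\<theta>\<in>Pe. h \<theta> / f \<theta> \<le> lo"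
    and loP: "lo = -K \<or> (\<exists>t\<in>Pe. lo = h t / f t)"
  proof (cases "Pe = {}")
    case True then show ?thesis using that[of "-K"] K0 by auto
  next
    case False
    obtain t where t: "t \<in> Pe" and tm: "\<forall>y\<in>Pe. h y / f y \<le> h t / f t"
      using continuous_attains_sup[OF cPe False crP] by blast
    have ft: "f t > 0" "t \<in> \<Theta>" "f t \<ge> \<eta>" using t eta0 by (auto simp: Pe_def)
    have "h t / f t < K" using rP[OF ft(2,3)] ft(1) by (simp add: divide_less_eq)
    show ?thesis
      by (rule that[of "max (-K) (h t / f t)"]) (use tm t K0 \<open>h t / f t < K\<close> in auto)
  qed
  obtain hi where hi: "hi \<le> K" "-K < hi" "\<forall>\<theta>\<in>Ne. hi \<le> h \<theta> / f \<theta>"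
    and hiN: "hi = K \<or> (\<exists>t\<in>Ne. hi = h t / f t)"
  proof (cases "Ne = {}")
    case True then show ?thesis using that[of "K"] K0 by auto
  next
    case False
    obtain t where t: "t \<in> Ne" and tm: "\<forall>y\<in>Ne. h t / f t \<le> h y / f y"
      using continuous_attains_inf[OF cNe False crN] by blast
    have ft: "f t < 0" "t \<in> \<Theta>" "f t \<le> -\<eta>" using t eta0 by (auto simp: Ne_def)
    have "h t < (-K) * f t" using rN[OF ft(2,3)] by simp
    then have "-K < h t / f t" using ft(1) by (simp add: less_divide_eq)
    show ?thesis
      by (rule that[of "min K (h t / f t)"]) (use tm t K0 \<open>-K < h t / f t\<close> in auto)
  qed
  have lohi: "lo < hi"
  proof -
    consider "lo = -K" | "hi = K" | "\<exists>t\<in>Pe. lo = h t / f t" "\<exists>t\<in>Ne. hi = h t / f t"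
      using loP hiN by blast
    then show ?thesis
    proof cases
      case 1 then show ?thesis using hi by simp
    next
      case 2 then show ?thesis using lo by simp
    next
      case 3
      then obtain t t' where t: "t \<in> Pe" "lo = h t / f t" and t': "t' \<in> Ne" "hi = h t' / f t'" by blast
      have ft: "0 < f t" "t \<in> \<Theta>" using t eta0 by (auto simp: Pe_def)
      have ft': "f t' < 0" "t' \<in> \<Theta>" using t' eta0 by (auto simp: Ne_def)
      have "f t * h t' - f t' * h t < 0" using PN ft ft' by blast
      then show ?thesis using t t' ft ft' by (simp add: ratio_lemma)
    qed
  qed
  define k where "k = (lo + hi) / 2"
  have k: "-K < k" "k < K" "lo < k" "k < hi" using lo hi lohi by (auto simp: k_def)
  show ?thesis
  proof (intro exI ballI)
    fix \<theta> assume t: "\<theta> \<in> \<Theta>"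
    consider "f \<theta> \<ge> \<eta>" | "f \<theta> \<le> -\<eta>" | "f \<theta> = 0" | "\<bar>f \<theta>\<bar> < \<eta>" "f \<theta> \<noteq> 0" by linarith
    then show "h \<theta> < f \<theta> * k"
    proof cases
      case 1
      then have "\<theta> \<in> Pe" "f \<theta> > 0" using t eta0 by (auto simp: Pe_def)
      then have "h \<theta> / f \<theta> < k" using lo k by force
      then show ?thesis using \<open>f \<theta> > 0\<close> by (simp add: divide_less_eq mult.commute)
    next
      case 2
      then have "\<theta> \<in> Ne" "f \<theta> < 0" using t eta0 by (auto simp: Ne_def)
      then have "k < h \<theta> / f \<theta>" using hi k by force
      then show ?thesis using \<open>f \<theta> < 0\<close> by (simp add: less_divide_eq mult.commute)
    next
      case 3 then show ?thesis using Z t by simp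
    next
      case 4
      then have "h \<theta> \<le> -\<delta>" using eZ t eta_e by auto
      moreover have "\<bar>f \<theta> * k\<bar> < \<delta>"
      proof -
        have "\<bar>f \<theta> * k\<bar> = \<bar>f \<theta>\<bar> * \<bar>k\<bar>" by (simp add: abs_mult)
        also have "\<dots> \<le> \<eta> * \<bar>k\<bar>" using 4 by (intro mult_right_mono) auto
        also have "\<dots> < \<eta> * K" using k eta0 by (intro mult_strict_left_mono) auto
        finally show ?thesis using Keta by (simp add: mult.commute)
      qed
      ultimately show ?thesis by linarith
    qed
  qed
qed



lemma local_k:
  fixes \<Theta> :: "real set" and u ua :: "real \<Rightarrow> real \<Rightarrow> real"
  assumes cpt: "compact \<Theta>"
    and cu: "continuous_on ({0..1} \<times> \<Theta>) (\<lambda>(a, \<theta>). u a \<theta>)"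
    and cua: "continuous_on ({0..1} \<times> \<Theta>) (\<lambda>(a, \<theta>). ua a \<theta>)"
    and k0: "\<forall>\<theta>\<in>\<Theta>. ua a0 \<theta> < u a0 \<theta> * k0" and a0: "a0 \<in> {0..1}"
  shows "\<exists>r>0. \<forall>b\<in>{0..1}. \<bar>b - a0\<bar> < r \<longrightarrow> (\<forall>\<theta>\<in>\<Theta>. ua b \<theta> < u b \<theta> * k0)"
proof -
  let ?S = "{0..1::real} \<times> \<Theta>"
  let ?F = "\<lambda>p. (\<lambda>(a, \<theta>). ua a \<theta>) p - (\<lambda>(a, \<theta>). u a \<theta>) p * k0"
  have cS: "compact ?S" using cpt by (intro compact_Times) auto
  have cF: "continuous_on ?S ?F" by (intro continuous_on_diff continuous_on_mult_right cu cua)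
  define C where "C = {p\<in>?S. ?F p \<in> {0..}}"
  have "compact C" unfolding C_def by (rule compact_sub[OF cS cF]) auto
  then have "compact (fst ` C)" by (intro compact_continuous_image continuous_intros)
  then have cl: "closed (fst ` C)" by (rule compact_imp_closed)
  have na: "a0 \<notin> fst ` C"
  proof
    assume "a0 \<in> fst ` C"
    then obtain \<theta> where "(a0, \<theta>) \<in> C" by force
    then show False using k0 by (auto simp: C_def)
  qed
  have "open (- fst ` C)" using cl by (simp add: open_Compl)
  then obtain r where r: "r > 0" "ball a0 r \<subseteq> - fst ` C" using na open_contains_ball by blast
  show ?thesis
  proof (intro exI[of _ r] conjI ballI impI r(1))
    fix b \<theta> assume b: "b \<in> {0..1}" "\<bar>b - a0\<bar> < r" and t: "\<theta> \<in> \<Theta>"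
    have "b \<in> ball a0 r" using b by (simp add: dist_real_def abs_minus_commute)
    then have "b \<notin> fst ` C" using r by auto
    then have "(b, \<theta>) \<notin> C" by force
    then show "ua b \<theta> < u b \<theta> * k0" using b t by (auto simp: C_def)
  qed
qed

lemma glue_k:
  fixes \<Theta> :: "real set" and u ua :: "real \<Rightarrow> real \<Rightarrow> real"
  assumes loc: "\<forall>a\<in>{0..1::real}. \<exists>r k0. r > 0 \<and> (\<forall>b\<in>{0..1}. \<bar>b - a\<bar> < r \<longrightarrow> (\<forall>\<theta>\<in>\<Theta>. ua b \<theta> < u b \<theta> * k0))"
  shows "\<exists>k. continuous_on {0..1} k \<and> (\<forall>a\<in>{0..1}. \<forall>\<theta>\<in>\<Theta>. ua a \<theta> < u a \<theta> * k a)"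
proof -
  obtain R Kc where RK: "\<forall>a\<in>{0..1::real}. R a > 0 \<and> (\<forall>b\<in>{0..1}. \<bar>b - a\<bar> < R a \<longrightarrow> (\<forall>\<theta>\<in>\<Theta>. ua b \<theta> < u b \<theta> * Kc a))"
    using bchoice[OF loc] by (metis (no_types, lifting) case_prod_conv) 
  obtain T where T: "T \<subseteq> {0..1}" "finite T" "{0..1} \<subseteq> (\<Union>c\<in>T. ball c (R c))"
  proof (rule compactE_image[of "{0..1::real}" "{0..1}" "\<lambda>c. ball c (R c)"])
    show "{0..1} \<subseteq> (\<Union>c\<in>{0..1}. ball c (R c))" using RK by force
  qed auto
  define \<phi> where "\<phi> t x = max 0 (R t - \<bar>x - t\<bar>)" for t x :: real
  define D where "D x = (\<Sum>t\<in>T. \<phi> t x)" for x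
  define k where "k x = (\<Sum>t\<in>T. \<phi> t x * Kc t) / D x" for x
  have phi0: "\<phi> t x \<ge> 0" for t x by (simp add: \<phi>_def)
  have Dpos: "D x > 0" if x: "x \<in> {0..1}" for x
  proof -
    obtain t where t: "t \<in> T" "x \<in> ball t (R t)" using T x by blast
    have "\<phi> t x > 0" using t by (simp add: \<phi>_def dist_real_def abs_minus_commute)
    then show ?thesis unfolding D_def using t phi0 T(2) by (intro sum_pos2) auto
  qed
  have "continuous_on {0..1} k"
    unfolding k_def D_def \<phi>_def
    by (intro continuous_intros) (use Dpos in \<open>force simp: D_def \<phi>_def\<close>)
  moreover have "\<forall>a\<in>{0..1::real}. \<forall>\<theta>\<in>\<Theta>. ua a \<theta> < u a \<theta> * k a"
  proof (intro ballI)
    fix x :: real and \<theta> assume x: "x \<in> {0..1}" and th: "\<theta> \<in> \<Theta>"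
    have num: "0 < (\<Sum>t\<in>T. \<phi> t x * (u x \<theta> * Kc t - ua x \<theta>))"
    proof -
      obtain t where t: "t \<in> T" "x \<in> ball t (R t)" using T x by blast
      have pos: "\<phi> t x * (u x \<theta> * Kc t - ua x \<theta>) > 0" if "t \<in> T" "\<bar>x - t\<bar> < R t" for t
      proof -
        have "\<phi> t x > 0" using that by (simp add: \<phi>_def)
        moreover have "ua x \<theta> < u x \<theta> * Kc t" using RK that T x th by blast
        ultimately show ?thesis by simp
      qed
      have nn: "\<phi> t x * (u x \<theta> * Kc t - ua x \<theta>) \<ge> 0" if "t \<in> T" for t
      proof (cases "\<bar>x - t\<bar> < R t")
        case True then show ?thesis using pos[OF that True] by simp
      next
        case False then have "\<phi> t x = 0" by (simp add: \<phi>_def)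
        then show ?thesis by simp
      qed
      show ?thesis
        by (rule sum_pos2[OF T(2) t(1)]) (use nn pos[OF t(1)] t in \<open>auto simp: dist_real_def abs_minus_commute\<close>)
    qed
    have eq: "(\<Sum>t\<in>T. \<phi> t x * (u x \<theta> * Kc t - ua x \<theta>)) = u x \<theta> * (\<Sum>t\<in>T. \<phi> t x * Kc t) - ua x \<theta> * D x"
      by (simp add: D_def sum_distrib_left sum_subtractf algebra_simps)
    have "u x \<theta> * k x - ua x \<theta> = (u x \<theta> * (\<Sum>t\<in>T. \<phi> t x * Kc t) - ua x \<theta> * D x) / D x"
      using Dpos[OF x] by (simp add: k_def field_simps)
    also have "\<dots> > 0" using num eq Dpos[OF x] by simp
    finally show "ua x \<theta> < u x \<theta> * k x" by simp
  qed
  ultimately show ?thesis by blast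
qed

lemma g_construct:
  fixes \<Theta> :: "real set" and u ua :: "real \<Rightarrow> real \<Rightarrow> real" and k :: "real \<Rightarrow> real"
  assumes ck: "continuous_on {0..1} k"
    and kk: "\<forall>a\<in>{0..1}. \<forall>\<theta>\<in>\<Theta>. ua a \<theta> < u a \<theta> * k a"
    and du: "\<And>a \<theta>. a \<in> {0..1} \<Longrightarrow> \<theta> \<in> \<Theta> \<Longrightarrow>
           ((\<lambda>b. u b \<theta>) has_real_derivative ua a \<theta>) (at a within {0..1})"
  shows "\<exists>g :: real \<Rightarrow> real.
              (\<forall>a\<in>{0..1}. 0 < g a) \<and> g differentiable_on {0..1} \<and>
              (\<forall>a\<in>{0..1}. \<forall>\<theta>\<in>\<Theta>. \<exists>d.
                 ((\<lambda>b. u b \<theta> / g b) has_real_derivative d) (at a within {0..1}) \<and> d < 0)"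
proof -
  define g where "g = (\<lambda>a. exp (integral {0..a} k))"
  have gd: "(g has_real_derivative g a * k a) (at a within {0..1})" if a: "a \<in> {0..1}" for a
  proof -
    have "((\<lambda>x. integral {0..x} k) has_real_derivative k a) (at a within {0..1})"
      using integral_has_vector_derivative[OF ck a] by (simp add: has_real_derivative_iff_has_vector_derivative)
    from DERIV_chain2[OF DERIV_exp this] show ?thesis by (simp add: g_def)
  qed
  have gp: "\<forall>a\<in>{0..1}. 0 < g a" by (simp add: g_def)
  have "g differentiable_on {0..1}"
    unfolding differentiable_on_def using gd real_differentiable_def by blast
  moreover have "\<forall>a\<in>{0..1}. \<forall>\<theta>\<in>\<Theta>. \<exists>d.
                 ((\<lambda>b. u b \<theta> / g b) has_real_derivative d) (at a within {0..1}) \<and> d < 0"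
  proof (intro ballI)
    fix a \<theta> assume a: "a \<in> {0..1::real}" and t: "\<theta> \<in> \<Theta>"
    have ga: "g a > 0" using gp a by blast
    have D: "((\<lambda>b. u b \<theta> / g b) has_real_derivative (ua a \<theta> * g a - u a \<theta> * (g a * k a)) / (g a * g a)) (at a within {0..1})"
      by (rule DERIV_divide[OF du[OF a t] gd[OF a]]) (use ga in simp)
    have "(ua a \<theta> * g a - u a \<theta> * (g a * k a)) / (g a * g a) = (ua a \<theta> - u a \<theta> * k a) / g a"
      using ga by (simp add: field_simps)
    also have "\<dots> < 0" using kk a t ga by (simp add: divide_neg_pos)
    finally show "\<exists>d. ((\<lambda>b. u b \<theta> / g b) has_real_derivative d) (at a within {0..1}) \<and> d < 0"
      using D by blast
  qed
  ultimately show ?thesis using gp by blast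
qed

lemma quot_neg:
  fixes U G :: "real \<Rightarrow> real"
  assumes a: "a \<in> {0..1}"
    and dU: "(U has_real_derivative U') (at a within {0..1})"
    and dG: "(G has_real_derivative G') (at a within {0..1})"
    and G0: "G a > 0"
    and dq: "((\<lambda>b. U b / G b) has_real_derivative d) (at a within {0..1})" and d0: "d < 0"
  shows "U' * G a - U a * G' < 0"
proof -
  have D: "((\<lambda>b. U b / G b) has_real_derivative (U' * G a - U a * G') / (G a * G a)) (at a within {0..1})"
    by (rule DERIV_divide[OF dU dG]) (use G0 in simp)
  have "d = (U' * G a - U a * G') / (G a * G a)"
    using vector_derivative_unique_within_closed_interval[of 0 1 a "\<lambda>b. U b / G b" d]
      dq D a by (simp add: has_real_derivative_iff_has_vector_derivative)
  then have "(U' * G a - U a * G') / (G a * G a) < 0" using d0 by simp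
  moreover have "G a * G a > 0" using G0 by simp
  ultimately show ?thesis by (simp add: divide_less_0_iff)
qed



lemma mix_alg: "(d::real) \<noteq> 0 \<Longrightarrow> x / d * X + y / d * Y = (x * X + y * Y) / d"
  by (simp add: field_simps)

theorem lemma4:
  fixes \<Theta> :: "real set" and u ua :: "real \<Rightarrow> real \<Rightarrow> real"
  assumes "compact \<Theta>" and "\<Theta> \<subseteq> {0..1}"
    and "continuous_on ({0..1} \<times> \<Theta>) (\<lambda>(a, \<theta>). u a \<theta>)"
    and "\<And>a \<theta>. a \<in> {0..1} \<Longrightarrow> \<theta> \<in> \<Theta> \<Longrightarrow>
           ((\<lambda>b. u b \<theta>) has_real_derivative ua a \<theta>) (at a within {0..1})"
    and "continuous_on ({0..1} \<times> \<Theta>) (\<lambda>(a, \<theta>). ua a \<theta>)"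
  shows "((\<forall>a\<in>{0..1}. \<forall>M\<in>prob_measures_on \<Theta>.
              (\<integral>\<theta>. u a \<theta> \<partial>M) = 0 \<longrightarrow> (\<integral>\<theta>. ua a \<theta> \<partial>M) < 0)
          \<longleftrightarrow>
          (\<forall>\<theta>\<in>\<Theta>. \<forall>\<theta>'\<in>\<Theta>. \<forall>a\<in>{0..1}.
              (u a \<theta> = 0 \<longrightarrow> ua a \<theta> < 0) \<and>
              (u a \<theta> < 0 \<and> 0 < u a \<theta>' \<longrightarrow>
                 u a \<theta>' * ua a \<theta> - u a \<theta> * ua a \<theta>' < 0)))
       \<and>
         ((\<forall>\<theta>\<in>\<Theta>. \<forall>\<theta>'\<in>\<Theta>. \<forall>a\<in>{0..1}.
              (u a \<theta> = 0 \<longrightarrow> ua a \<theta> < 0) \<and>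
              (u a \<theta> < 0 \<and> 0 < u a \<theta>' \<longrightarrow>
                 u a \<theta>' * ua a \<theta> - u a \<theta> * ua a \<theta>' < 0))
          \<longleftrightarrow>
          (\<exists>g :: real \<Rightarrow> real.
              (\<forall>a\<in>{0..1}. 0 < g a) \<and> g differentiable_on {0..1} \<and>
              (\<forall>a\<in>{0..1}. \<forall>\<theta>\<in>\<Theta>. \<exists>d.
                 ((\<lambda>b. u b \<theta> / g b) has_real_derivative d) (at a within {0..1}) \<and> d < 0)))"
    (is "(?C1 \<longleftrightarrow> ?C2) \<and> (?C2 \<longleftrightarrow> ?C3)")
proof -
  note cpt = assms(1) and cu = assms(3) and du = assms(4) and cua = assms(5)
  have sl: "continuous_on \<Theta> (\<lambda>\<theta>. u a \<theta>)" "continuous_on \<Theta> (\<lambda>\<theta>. ua a \<theta>)" if a: "a \<in> {0..1}" for a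
  proof -
    have c: "continuous_on \<Theta> (\<lambda>\<theta>. (a, \<theta>))" by (intro continuous_intros)
    have s: "(\<lambda>\<theta>. (a, \<theta>)) ` \<Theta> \<subseteq> {0..1} \<times> \<Theta>" using a by auto
    show "continuous_on \<Theta> (\<lambda>\<theta>. u a \<theta>)" using continuous_on_compose2[OF cu c s] by simp
    show "continuous_on \<Theta> (\<lambda>\<theta>. ua a \<theta>)" using continuous_on_compose2[OF cua c s] by simp
  qed
  have 12: "?C1 \<Longrightarrow> ?C2"
  proof -
    assume C1: ?C1
    show ?C2
    proof (intro ballI conjI impI)
      fix \<theta> \<theta>' a assume t: "\<theta> \<in> \<Theta>" "\<theta>' \<in> \<Theta>" and a: "a \<in> {0..1::real}"
      {
        assume z: "u a \<theta> = 0"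
        let ?M = "distr (measure_pmf (bernoulli_pmf 1)) (restrict_space borel \<Theta>) (\<lambda>b. if b then \<theta> else \<theta>)"
        have Mp: "?M \<in> prob_measures_on \<Theta>" by (rule mix_meas(1)) (use t in auto)
        have "integral\<^sup>L ?M (\<lambda>x. u a x) = u a \<theta>" "integral\<^sup>L ?M (\<lambda>x. ua a x) = ua a \<theta>"
          using mix_meas(2)[OF t(1) t(1), of 1] sl[OF a] by auto
        moreover have "integral\<^sup>L ?M (\<lambda>x. u a x) = 0 \<longrightarrow> integral\<^sup>L ?M (\<lambda>x. ua a x) < 0"
          using C1 a Mp by blast
        ultimately show "ua a \<theta> < 0" using z by simp
      }
      {
        assume s: "u a \<theta> < 0 \<and> 0 < u a \<theta>'"
        define p where "p = u a \<theta>' / (u a \<theta>' - u a \<theta>)"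
        have dpos: "u a \<theta>' - u a \<theta> > 0" using s by simp
        have p: "0 \<le> p" "p \<le> 1" using s dpos by (auto simp: p_def divide_simps)
        have 1: "1 - p = - u a \<theta> / (u a \<theta>' - u a \<theta>)" using dpos by (simp add: p_def field_simps)
        let ?M = "distr (measure_pmf (bernoulli_pmf p)) (restrict_space borel \<Theta>) (\<lambda>b. if b then \<theta> else \<theta>')"
        have Mp: "?M \<in> prob_measures_on \<Theta>" by (rule mix_meas(1)) (use t p in auto)
        have impl: "integral\<^sup>L ?M (\<lambda>x. u a x) = 0 \<longrightarrow> integral\<^sup>L ?M (\<lambda>x. ua a x) < 0"
          using C1 a Mp by blast
        have "integral\<^sup>L ?M (\<lambda>x. u a x) = p * u a \<theta> + (1 - p) * u a \<theta>'"
          "integral\<^sup>L ?M (\<lambda>x. ua a x) = p * ua a \<theta> + (1 - p) * ua a \<theta>'"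
          using mix_meas(2)[OF t p] sl[OF a] by auto
        moreover have "p * u a \<theta> + (1 - p) * u a \<theta>' = 0"
          unfolding 1 using dpos by (simp add: p_def field_simps)
        ultimately have "p * ua a \<theta> + (1 - p) * ua a \<theta>' < 0" using impl by simp
        moreover have "p * ua a \<theta> + (1 - p) * ua a \<theta>' = (u a \<theta>' * ua a \<theta> + (- u a \<theta>) * ua a \<theta>') / (u a \<theta>' - u a \<theta>)"
          unfolding 1 unfolding p_def by (rule mix_alg) (use dpos in simp)
        ultimately show "u a \<theta>' * ua a \<theta> - u a \<theta> * ua a \<theta>' < 0" using dpos by (simp add: divide_less_0_iff)
      }
    qed
  qed
  have 21: "?C2 \<Longrightarrow> ?C1"
  proof (intro ballI impI)
    fix a M assume C2: ?C2 and a: "a \<in> {0..1::real}" and M: "M \<in> prob_measures_on \<Theta>"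
      and I: "(\<integral>\<theta>. u a \<theta> \<partial>M) = 0"
    show "(\<integral>\<theta>. ua a \<theta> \<partial>M) < 0"
      by (rule meas_21[OF cpt sl[OF a] M _ _ I]) (use C2 a in auto)
  qed
  have 23: "?C2 \<Longrightarrow> ?C3"
  proof -
    assume C2: ?C2
    have loc: "\<forall>a\<in>{0..1::real}. \<exists>r k0. r > 0 \<and> (\<forall>b\<in>{0..1}. \<bar>b - a\<bar> < r \<longrightarrow> (\<forall>\<theta>\<in>\<Theta>. ua b \<theta> < u b \<theta> * k0))"
    proof
      fix a :: real assume a: "a \<in> {0..1}"
      obtain k0 where k0: "\<forall>\<theta>\<in>\<Theta>. ua a \<theta> < u a \<theta> * k0"
        using point_k[OF cpt sl[OF a]] C2 a by blast
      show "\<exists>r k0. r > 0 \<and> (\<forall>b\<in>{0..1}. \<bar>b - a\<bar> < r \<longrightarrow> (\<forall>\<theta>\<in>\<Theta>. ua b \<theta> < u b \<theta> * k0))"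
        using local_k[OF cpt cu cua k0 a] by blast
    qed
    obtain k where k: "continuous_on {0..1} k" "\<forall>a\<in>{0..1}. \<forall>\<theta>\<in>\<Theta>. ua a \<theta> < u a \<theta> * k a"
      using glue_k[OF loc] by blast
    show ?C3 by (rule g_construct[OF k du])
  qed
  have 32: "?C3 \<Longrightarrow> ?C2"
  proof -
    assume ?C3
    then obtain g where gp: "\<forall>a\<in>{0..1}. 0 < g a" and gd: "g differentiable_on {0..1}"
      and dq: "\<forall>a\<in>{0..1}. \<forall>\<theta>\<in>\<Theta>. \<exists>d. ((\<lambda>b. u b \<theta> / g b) has_real_derivative d) (at a within {0..1}) \<and> d < 0"
      by blast
    show ?C2
    proof (intro ballI conjI impI)
      fix \<theta> \<theta>' a assume t: "\<theta> \<in> \<Theta>" "\<theta>' \<in> \<Theta>" and a: "a \<in> {0..1::real}"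
      obtain G' where G': "(g has_real_derivative G') (at a within {0..1})"
        using gd a unfolding differentiable_on_def real_differentiable_def by blast
      have X: "ua a x * g a - u a x * G' < 0" if x: "x \<in> \<Theta>" for x
      proof -
        obtain d where "((\<lambda>b. u b x / g b) has_real_derivative d) (at a within {0..1})" "d < 0"
          using dq a x by blast
        then show ?thesis using quot_neg[OF a du[OF a x] G'] gp a by blast
      qed
      have ga: "g a > 0" using gp a by blast
      {
        assume "u a \<theta> = 0"
        then have "ua a \<theta> * g a < 0" using X[OF t(1)] by simp
        then show "ua a \<theta> < 0" using ga by (simp add: mult_less_0_iff)
      }
      {
        assume s: "u a \<theta> < 0 \<and> 0 < u a \<theta>'"
        have "u a \<theta>' * (ua a \<theta> * g a - u a \<theta> * G') < 0" using X[OF t(1)] s by (simp add: mult_pos_neg)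
        moreover have "(- u a \<theta>) * (ua a \<theta>' * g a - u a \<theta>' * G') < 0" using X[OF t(2)] s by (intro mult_pos_neg) auto
        ultimately have "g a * (u a \<theta>' * ua a \<theta> - u a \<theta> * ua a \<theta>') < 0" by (simp add: algebra_simps)
        then show "u a \<theta>' * ua a \<theta> - u a \<theta> * ua a \<theta>' < 0" using ga by (simp add: mult_less_0_iff)
      }
    qed
  qed
  show ?thesis using 12 21 23 32 by blast
qed


end
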